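(* Let $f_1,\dots,f_n,g\in\mathbb K[x,\bar y_0,\bar y]$ and $\bar r_0=(r_{01},\dots,r_{0n})\in\mathbb K^n$ with $g(0,\bar r_0,\bar r_0)\neq 0$. Let $w$ be a new variable and let $h(x,\bar y_0,\bar y,w)$ be the polynomial obtained from the syntactic stream derivative $g'=g'(x,\bar y_0,\bar y,\bar y')$ by replacing each variable $y_i'$ with the polynomial $f_i(x,\bar y_0,\bar y)\cdot w$, $i=1,\dots,n$. Let $\bar\sigma=(\sigma_1,\dots,\sigma_n)\in\Sigma^n$ satisfy $$\sigma_i'=f_i(X,\bar r_0,\bar\sigma)\times g(X,\bar r_0,\bar\sigma)^{-1},\qquad \sigma_i(0)=r_{0i}\qquad(i=1,\dots,n).$$ Then, with $\tau:=g(X,\bar r_0,\bar\sigma)^{-1}$, the tuple $(\bar\sigma,\tau)$ is the unique solution of the polynomial initial value problem $$\sigma_i'=f_i(X,\bar r_0,\bar\sigma)\times\tau,\ \ \sigma_i(0)=r_{0i}\ (i=1,\dots,n);\qquad \tau'=-g(0,\bar r_0,\bar r_0)^{-1}\, h(X,\bar r_0,\bar\sigma,\tau)\times\tau,\ \ \tau(0)=g(0,\bar r_0,\bar r_0)^{-1}.$$ Conversely, for any $(\bar\sigma,\tau)\in\Sigma^{n+1}$ satisfying this polynomial initial value problem, $\bar\sigma$ satisfies the rational system displayed above.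
   Context: Streams $\Sigma=\mathbb K^\omega$ over a field $\mathbb K$ of characteristic $0$, with pointwise sum, convolution $(\sigma\times\tau)(i)=\sum_{j=0}^{i}\sigma(j)\tau(i-j)$, scalars $r$ identified with $(r,0,0,\dots)$, $X=(0,1,0,\dots)$, stream derivative $\sigma'(i)=\sigma(i+1)$. A stream $\sigma$ with $\sigma(0)\ne0$ has a unique convolution inverse $\sigma^{-1}$. Evaluation $q(X,\bar r_0,\bar\sigma,\dots)$ of a polynomial substitutes $x\mapsto X$, $y_{0i}\mapsto r_{0i}$ (constant stream), $y_i\mapsto\sigma_i$, $w\mapsto\tau$. The syntactic stream derivative: with $y_0:=x$, $y_{00}:=0$, total order $y_0<y_1<\dots<y_n$, and $\min(m)$ the least variable of a monomial $m\neq1$, define on monomials by induction on total degree $(1)'=0$, $(x)'=1$, $(y_i)'=y_i'$ ($1\le i\le n$), $(y_i m)'=y_i' m+y_{0i}(m)'$ when $m\ne1$ and $y_i=\min(y_im)$, and extend linearly; for $g\in\mathbb K[x,\bar y_0,\bar y]$ the $y_{0i}$ appearing in $g$ are treated as coefficients (constants), so $g'\in\mathbb K[x,\bar y_0,\bar y,\bar y']$. A solution of a polynomial stream differential equation system $y_i'=p_i$, $y_i(0)=r_i$ is a tuple of streams with $\sigma_i'=p_i(X,\bar\sigma)$ and $\sigma_i(0)=r_i$. *)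

theory Defs
  imports "HOL-Library.Poly_Mapping" "HOL-Computational_Algebra.Formal_Power_Series"
begin

text \<open>Streams K^omega are represented by formal power series: the i-th entry of a
stream s is s $ i; pointwise sum and convolution product are the ring operations of
'a fps; the scalar r is fps_const r; X is fps_X; convolution inverse is inverse.\<close>

definition sderiv :: "'a fps \<Rightarrow> 'a fps" where
  "sderiv s = Abs_fps (\<lambda>i. fps_nth s (i + 1))"

text \<open>Variables: x, y_{0i}, y_i, y_i' and the new variable w.\<close>
datatype var = Vx | Vy0 nat | Vy nat | Vyd nat | Vw

type_synonym 'a mpoly = "(var \<Rightarrow>\<^sub>0 nat) \<Rightarrow>\<^sub>0 'a"

definition PVar :: "var \<Rightarrow> 'a::comm_ring_1 mpoly" where
  "PVar v = Poly_Mapping.single (Poly_Mapping.single v 1) 1"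

definition PConst :: "'a::comm_ring_1 \<Rightarrow> 'a mpoly" where
  "PConst c = Poly_Mapping.single 0 c"

definition pvars :: "'a::zero mpoly \<Rightarrow> var set" where
  "pvars p = {v. \<exists>m\<in>Poly_Mapping.keys p. v \<in> Poly_Mapping.keys m}"

definition base_vars :: "nat \<Rightarrow> var set" where
  "base_vars n = {Vx} \<union> Vy0 ` {1..n} \<union> Vy ` {1..n}"

definition peval :: "('a::zero \<Rightarrow> 'b::comm_ring_1) \<Rightarrow> (var \<Rightarrow> 'b) \<Rightarrow> 'a mpoly \<Rightarrow> 'b" where
  "peval c \<rho> p = (\<Sum>m\<in>Poly_Mapping.keys p. c (Poly_Mapping.lookup p m) * (\<Prod>v\<in>Poly_Mapping.keys m. \<rho> v ^ Poly_Mapping.lookup m v))"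

definition sassign :: "(nat \<Rightarrow> 'a::comm_ring_1) \<Rightarrow> (nat \<Rightarrow> 'a fps) \<Rightarrow> 'a fps \<Rightarrow> var \<Rightarrow> 'a fps" where
  "sassign r0 \<sigma> \<tau> v = (case v of Vx \<Rightarrow> fps_X | Vy0 i \<Rightarrow> fps_const (r0 i) | Vy i \<Rightarrow> \<sigma> i
                         | Vyd i \<Rightarrow> 0 | Vw \<Rightarrow> \<tau>)"

definition seval :: "(nat \<Rightarrow> 'a::comm_ring_1) \<Rightarrow> (nat \<Rightarrow> 'a fps) \<Rightarrow> 'a fps \<Rightarrow> 'a mpoly \<Rightarrow> 'a fps" where
  "seval r0 \<sigma> \<tau> p = peval fps_const (sassign r0 \<sigma> \<tau>) p"

definition eval0 :: "(nat \<Rightarrow> 'a::comm_ring_1) \<Rightarrow> 'a mpoly \<Rightarrow> 'a" where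
  "eval0 r0 p = peval id (\<lambda>v. case v of Vx \<Rightarrow> 0 | Vy0 i \<Rightarrow> r0 i | Vy i \<Rightarrow> r0 i
                                  | Vyd i \<Rightarrow> 0 | Vw \<Rightarrow> 0) p"

definition yvar :: "nat \<Rightarrow> var" where
  "yvar i = (if i = 0 then Vx else Vy i)"

definition dvar :: "nat \<Rightarrow> 'a::comm_ring_1 mpoly" where
  "dvar i = (if i = 0 then 1 else PVar (Vyd i))"

definition y0var :: "nat \<Rightarrow> 'a::comm_ring_1 mpoly" where
  "y0var i = (if i = 0 then 0 else PVar (Vy0 i))"

text \<open>Derivative of a monomial in x, y_1..y_n given as the ascending list of the indices
of its variables (with multiplicity): the head is the least variable, so
(y_i m)' = y_i' m + y_0i (m)'.\<close>
fun dlist :: "nat list \<Rightarrow> 'a::comm_ring_1 mpoly" where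
  "dlist [] = 0"
| "dlist (i # is) = dvar i * prod_list (map (\<lambda>j. PVar (yvar j)) is) + y0var i * dlist is"

definition mon_idx :: "nat \<Rightarrow> (var \<Rightarrow>\<^sub>0 nat) \<Rightarrow> nat list" where
  "mon_idx n m = concat (map (\<lambda>i. replicate (Poly_Mapping.lookup m (yvar i)) i) [0..<n+1])"

text \<open>Linear extension, the y_{0i} being treated as coefficients.\<close>
definition pderiv_s :: "nat \<Rightarrow> 'a::comm_ring_1 mpoly \<Rightarrow> 'a mpoly" where
  "pderiv_s n p = (\<Sum>m\<in>Poly_Mapping.keys p. PConst (Poly_Mapping.lookup p m)
       * (\<Prod>i\<in>{1..n}. PVar (Vy0 i) ^ Poly_Mapping.lookup m (Vy0 i)) * dlist (mon_idx n m))"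

definition subst_d :: "(nat \<Rightarrow> 'a::comm_ring_1 mpoly) \<Rightarrow> 'a mpoly \<Rightarrow> 'a mpoly" where
  "subst_d f p = peval PConst (\<lambda>v. case v of Vyd i \<Rightarrow> f i * PVar Vw | _ \<Rightarrow> PVar v) p"

end

theory Submission
  imports Defs
begin


definition mon :: "(var \<Rightarrow> 'b::comm_ring_1) \<Rightarrow> (var \<Rightarrow>\<^sub>0 nat) \<Rightarrow> 'b" where
  "mon \<rho> m = (\<Prod>v\<in>Poly_Mapping.keys m. \<rho> v ^ Poly_Mapping.lookup m v)"

definition chom :: "('a::comm_ring_1 \<Rightarrow> 'b::comm_ring_1) \<Rightarrow> bool" where
  "chom c \<longleftrightarrow> c 0 = 0 \<and> c 1 = 1 \<and> (\<forall>a b. c (a + b) = c a + c b) \<and> (\<forall>a b. c (a * b) = c a * c b)"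

lemma chom_0: "chom c \<Longrightarrow> c 0 = 0" and chom_1: "chom c \<Longrightarrow> c 1 = 1"
  and chom_add: "chom c \<Longrightarrow> c (a + b) = c a + c b" and chom_mult: "chom c \<Longrightarrow> c (a * b) = c a * c b"
  by (simp_all add: chom_def)

lemma mon_superset:
  assumes "finite S" "Poly_Mapping.keys m \<subseteq> S"
  shows "mon \<rho> m = (\<Prod>v\<in>S. \<rho> v ^ Poly_Mapping.lookup m v)"
  unfolding mon_def
  by (rule prod.mono_neutral_left) (use assms in \<open>auto simp: in_keys_iff\<close>)

lemma mon_add: "mon \<rho> (a + b) = mon \<rho> a * mon \<rho> b"
proof -
  let ?S = "Poly_Mapping.keys a \<union> Poly_Mapping.keys b"
  have f: "finite ?S" by simp
  have "mon \<rho> (a + b) = (\<Prod>v\<in>?S. \<rho> v ^ Poly_Mapping.lookup (a+b) v)"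
    by (rule mon_superset[OF f keys_add])
  also have "\<dots> = (\<Prod>v\<in>?S. \<rho> v ^ Poly_Mapping.lookup a v) * (\<Prod>v\<in>?S. \<rho> v ^ Poly_Mapping.lookup b v)"
    by (simp add: lookup_add power_add prod.distrib)
  also have "\<dots> = mon \<rho> a * mon \<rho> b"
    by (simp add: mon_superset[OF f])
  finally show ?thesis .
qed

lemma mon_zero[simp]: "mon \<rho> 0 = 1" by (simp add: mon_def)

lemma mon_single: "mon \<rho> (Poly_Mapping.single v k) = \<rho> v ^ k"
  by (simp add: mon_def)

lemma peval_alt: "peval c \<rho> p = (\<Sum>m\<in>Poly_Mapping.keys p. c (Poly_Mapping.lookup p m) * mon \<rho> m)"
  by (simp add: peval_def mon_def)

lemma peval_superset:
  assumes "c 0 = 0" "finite S" "Poly_Mapping.keys p \<subseteq> S"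
  shows "peval c \<rho> p = (\<Sum>m\<in>S. c (Poly_Mapping.lookup p m) * mon \<rho> m)"
  unfolding peval_alt
  by (rule sum.mono_neutral_left) (use assms in \<open>auto simp: in_keys_iff\<close>)

lemma peval_add:
  assumes "chom c"
  shows "peval c \<rho> (p + q) = peval c \<rho> p + peval c \<rho> q"
proof -
  let ?S = "Poly_Mapping.keys p \<union> Poly_Mapping.keys q"
  have f: "finite ?S" by simp
  have c0: "c 0 = 0" using assms by (simp add: chom_def)
  have "peval c \<rho> (p + q) = (\<Sum>m\<in>?S. c (Poly_Mapping.lookup (p+q) m) * mon \<rho> m)"
    by (rule peval_superset[where c=c, OF c0 f keys_add])
  also have "\<dots> = (\<Sum>m\<in>?S. c (Poly_Mapping.lookup p m) * mon \<rho> m) + (\<Sum>m\<in>?S. c (Poly_Mapping.lookup q m) * mon \<rho> m)"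
    using assms by (simp add: lookup_add chom_def distrib_right sum.distrib)
  also have "\<dots> = peval c \<rho> p + peval c \<rho> q"
    by (simp add: peval_superset[where c=c, OF c0 f])
  finally show ?thesis .
qed

lemma peval_zero[simp]: "peval c \<rho> 0 = 0" by (simp add: peval_def)

lemma peval_sum:
  assumes "chom c"
  shows "peval c \<rho> (sum f A) = (\<Sum>x\<in>A. peval c \<rho> (f x))"
  by (induction A rule: infinite_finite_induct) (auto simp: peval_add[OF assms])

lemma peval_single:
  assumes "c 0 = 0"
  shows "peval c \<rho> (Poly_Mapping.single m a) = c a * mon \<rho> m"
  using peval_superset[where c=c, OF assms, of "{m}"] by (simp add: lookup_single)

lemma sum_monomials: "(\<Sum>m\<in>Poly_Mapping.keys p. Poly_Mapping.single m (Poly_Mapping.lookup p m)) = p"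
proof (rule poly_mapping_eqI)
  fix k
  have "Poly_Mapping.lookup (\<Sum>m\<in>Poly_Mapping.keys p. Poly_Mapping.single m (Poly_Mapping.lookup p m)) k
     = (\<Sum>m\<in>Poly_Mapping.keys p. (if m = k then Poly_Mapping.lookup p m else 0))"
    unfolding lookup_sum lookup_single when_def by (rule refl)
  also have "\<dots> = (if k \<in> Poly_Mapping.keys p then Poly_Mapping.lookup p k else 0)"
    by (simp add: sum.delta)
  also have "\<dots> = Poly_Mapping.lookup p k" by (auto simp: in_keys_iff)
  finally show "Poly_Mapping.lookup (\<Sum>m\<in>Poly_Mapping.keys p. Poly_Mapping.single m (Poly_Mapping.lookup p m)) k = Poly_Mapping.lookup p k" .
qed

lemma peval_single_mult:
  assumes "chom c"
  shows "peval c \<rho> (Poly_Mapping.single a x * Poly_Mapping.single b y)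
         = (c x * mon \<rho> a) * (c y * mon \<rho> b)"
proof -
  have c0: "c 0 = 0" and cm: "c (x*y) = c x * c y" using assms by (auto simp: chom_def)
  show ?thesis
    unfolding mult_single peval_single[where c=c, OF c0] cm mon_add by (simp only: ac_simps)
qed

lemma peval_mult:
  assumes "chom c"
  shows "peval c \<rho> (p * q) = peval c \<rho> p * peval c \<rho> q"
proof -
  have "p * q = (\<Sum>a\<in>Poly_Mapping.keys p. \<Sum>b\<in>Poly_Mapping.keys q.
        Poly_Mapping.single a (Poly_Mapping.lookup p a) * Poly_Mapping.single b (Poly_Mapping.lookup q b))"
    by (subst (1) sum_monomials[symmetric, of p], subst (1) sum_monomials[symmetric, of q])
       (rule sum_product)
  hence "peval c \<rho> (p * q) = (\<Sum>a\<in>Poly_Mapping.keys p. \<Sum>b\<in>Poly_Mapping.keys q.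
        (c (Poly_Mapping.lookup p a) * mon \<rho> a) * (c (Poly_Mapping.lookup q b) * mon \<rho> b))"
    by (simp only: peval_sum[OF assms] peval_single_mult[OF assms])
  also have "\<dots> = peval c \<rho> p * peval c \<rho> q"
    unfolding peval_alt by (rule sum_product[symmetric])
  finally show ?thesis .
qed

lemma peval_one:
  assumes "chom c" shows "peval c \<rho> 1 = 1"
proof -
  have "peval c \<rho> (Poly_Mapping.single 0 1) = c 1 * mon \<rho> 0"
    by (rule peval_single) (rule chom_0[OF assms])
  thus ?thesis by (simp add: chom_1[OF assms])
qed

lemma peval_prod:
  assumes "chom c"
  shows "peval c \<rho> (prod f A) = (\<Prod>x\<in>A. peval c \<rho> (f x))"
  by (induction A rule: infinite_finite_induct) (auto simp: peval_mult[OF assms] peval_one[OF assms])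

lemma peval_power:
  assumes "chom c"
  shows "peval c \<rho> (p ^ k) = peval c \<rho> p ^ k"
  by (induction k) (auto simp: peval_mult[OF assms] peval_one[OF assms])

lemma peval_prod_list:
  assumes "chom c"
  shows "peval c \<rho> (prod_list (map f xs)) = prod_list (map (\<lambda>x. peval c \<rho> (f x)) xs)"
  by (induction xs) (auto simp: peval_mult[OF assms] peval_one[OF assms])

lemma peval_PVar: assumes "chom c" shows "peval c \<rho> (PVar v) = \<rho> v"
  unfolding PVar_def peval_single[where c=c, OF chom_0[OF assms]] chom_1[OF assms] mon_single by simp

lemma peval_PConst: assumes "chom c" shows "peval c \<rho> (PConst a) = c a"
  unfolding PConst_def peval_single[where c=c, OF chom_0[OF assms]] by simp

lemma chom_fps_const: "chom fps_const"
  by (simp add: chom_def)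
lemma chom_id: "chom id"
  by (simp add: chom_def)
lemma chom_PConst: "chom (PConst :: 'a::comm_ring_1 \<Rightarrow> 'a mpoly)"
  by (simp add: chom_def PConst_def single_add mult_single)

lemma peval_compose:
  assumes "chom c"
  shows "peval c \<rho> (peval PConst \<theta> p) = peval c (\<lambda>v. peval c \<rho> (\<theta> v)) p"
  unfolding peval_def[of PConst]
  by (simp add: peval_sum[OF assms] peval_mult[OF assms] peval_prod[OF assms] peval_power[OF assms]
      peval_PConst[OF assms] peval_def[of c "\<lambda>v. peval c \<rho> (\<theta> v)"])



notation fps_nth (infixl \<open>$\<close> 75)

lemma peval_cong:
  assumes "\<And>v. v \<in> pvars p \<Longrightarrow> \<rho>1 v = \<rho>2 v"
  shows "peval c \<rho>1 p = peval c \<rho>2 p"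
proof -
  have *: "\<And>m v. m \<in> Poly_Mapping.keys p \<Longrightarrow> v \<in> Poly_Mapping.keys m \<Longrightarrow> \<rho>1 v = \<rho>2 v"
    using assms unfolding pvars_def by blast
  show ?thesis unfolding peval_def
    by (rule sum.cong[OF refl], rule arg_cong[where f="\<lambda>x. _ * x"], rule prod.cong[OF refl])
       (simp add: *)
qed

lemma fps_prod_nth_0: "(prod f A) $ 0 = (\<Prod>x\<in>A. (f x) $ 0)"
  by (induction A rule: infinite_finite_induct) auto

lemma peval_nth0:
  "(peval fps_const \<rho> p) $ 0 = peval id (\<lambda>v. (\<rho> v) $ 0) p"
  unfolding peval_def by (simp add: fps_sum_nth fps_prod_nth_0 fps_nth_power_0)

section \<open>stream derivative\<close>

lemma sderiv_nth[simp]: "sderiv s $ i = s $ Suc i"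
  by (simp add: sderiv_def)

lemma fps_decomp: "(s::'a::comm_ring_1 fps) = fps_const (s $ 0) + fps_X * sderiv s"
  by (rule fps_ext) (case_tac n, auto)

lemma sderiv_add: "sderiv ((a::'a::comm_ring_1 fps) + b) = sderiv a + sderiv b"
  by (rule fps_ext) simp

lemma sderiv_sum: "sderiv (sum f A) = (\<Sum>x\<in>A. sderiv (f x :: 'a::comm_ring_1 fps))"
  by (rule fps_ext) (simp add: fps_sum_nth)

lemma sderiv_const_mult: "sderiv (fps_const (c::'a::comm_ring_1) * s) = fps_const c * sderiv s"
  by (rule fps_ext) simp

lemma sderiv_const[simp]: "sderiv (fps_const (c::'a::comm_ring_1)) = 0"
  by (rule fps_ext) simp

lemma sderiv_one[simp]: "sderiv (1::'a::comm_ring_1 fps) = 0"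
  by (rule fps_ext) simp

lemma sderiv_zero[simp]: "sderiv (0::'a::comm_ring_1 fps) = 0"
  by (rule fps_ext) simp

lemma sderiv_X[simp]: "sderiv (fps_X::'a::comm_ring_1 fps) = 1"
  by (rule fps_ext) simp

lemma sderiv_decomp[simp]: "sderiv (fps_const (c::'a::comm_ring_1) + fps_X * t) = t"
  by (rule fps_ext) simp

lemma ring_aux: "a = A + X * a' \<Longrightarrow> b = B + X * b' \<Longrightarrow> a * b = A * B + X * (a' * b + A * b')"
  for a b A B X a' b' :: "'a::comm_ring_1"
  by (simp add: algebra_simps)

lemma sderiv_mult: "sderiv ((a::'a::comm_ring_1 fps) * b) = sderiv a * b + fps_const (a $ 0) * sderiv b"
proof -
  have "a * b = fps_const (a $ 0) * fps_const (b $ 0) + fps_X * (sderiv a * b + fps_const (a $ 0) * sderiv b)"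
    by (rule ring_aux[OF fps_decomp fps_decomp])
  hence "a * b = fps_const (a $ 0 * b $ 0) + fps_X * (sderiv a * b + fps_const (a $ 0) * sderiv b)"
    by simp
  hence "sderiv (a * b) = sderiv (fps_const (a $ 0 * b $ 0) + fps_X * (sderiv a * b + fps_const (a $ 0) * sderiv b))"
    by (rule arg_cong)
  thus ?thesis by simp
qed

lemma sderiv_zero_eq: "sderiv (u::'a::comm_ring_1 fps) = 0 \<Longrightarrow> u = fps_const (u $ 0)"
  using fps_decomp[of u] by simp

section \<open>agreement up to k\<close>

definition agree :: "nat \<Rightarrow> 'a::comm_ring_1 fps \<Rightarrow> 'a fps \<Rightarrow> bool" where
  "agree k a b \<longleftrightarrow> (\<forall>j\<le>k. a $ j = b $ j)"

lemma agree_refl[simp]: "agree k a a" by (simp add: agree_def)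

lemma agree_add: "agree k a b \<Longrightarrow> agree k c d \<Longrightarrow> agree k (a + c) (b + d)"
  by (simp add: agree_def)

lemma agree_mult: "agree k a b \<Longrightarrow> agree k c d \<Longrightarrow> agree k (a * c) (b * d)"
  unfolding agree_def fps_mult_nth by (auto intro!: sum.cong)

lemma agree_sum: "(\<And>x. x \<in> A \<Longrightarrow> agree k (f x) (g x)) \<Longrightarrow> agree k (sum f A) (sum g A)"
  by (induction A rule: infinite_finite_induct) (auto intro: agree_add)

lemma agree_prod: "(\<And>x. x \<in> A \<Longrightarrow> agree k (f x) (g x)) \<Longrightarrow> agree k (prod f A) (prod g A)"
  by (induction A rule: infinite_finite_induct) (auto intro: agree_mult)

lemma agree_power: "agree k a b \<Longrightarrow> agree k (a ^ m) (b ^ m)"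
  by (induction m) (auto intro: agree_mult)

lemma agree_peval:
  assumes "\<And>v. v \<in> pvars p \<Longrightarrow> agree k (\<rho>1 v) (\<rho>2 v)"
  shows "agree k (peval fps_const \<rho>1 p) (peval fps_const \<rho>2 p)"
proof -
  have *: "\<And>m v. m \<in> Poly_Mapping.keys p \<Longrightarrow> v \<in> Poly_Mapping.keys m \<Longrightarrow> agree k (\<rho>1 v) (\<rho>2 v)"
    using assms unfolding pvars_def by blast
  show ?thesis unfolding peval_def
    by (rule agree_sum, rule agree_mult[OF agree_refl], rule agree_prod, rule agree_power)
       (simp add: *)
qed

lemma agree_Suc: "agree (Suc k) a b \<longleftrightarrow> a $ 0 = b $ 0 \<and> agree k (sderiv a) (sderiv b)"
proof
  assume "agree (Suc k) a b" thus "a $ 0 = b $ 0 \<and> agree k (sderiv a) (sderiv b)"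
    by (simp add: agree_def)
next
  assume H: "a $ 0 = b $ 0 \<and> agree k (sderiv a) (sderiv b)"
  show "agree (Suc k) a b" unfolding agree_def
  proof (intro allI impI)
    fix j assume "j \<le> Suc k"
    thus "a $ j = b $ j" using H by (cases j) (auto simp: agree_def)
  qed
qed

lemma agree_inverse:
  fixes a b :: "'a::field fps"
  assumes "agree k a b" "a $ 0 \<noteq> 0"
  shows "agree k (inverse a) (inverse b)"
proof -
  have b0: "b $ 0 \<noteq> 0" using assms by (simp add: agree_def)
  have e: "inverse a = inverse b + inverse a * inverse b * (b - a)"
  proof -
    have "inverse a * inverse b * (b - a) = inverse a * (b * inverse b) - (inverse a * a) * inverse b"
      by (simp add: algebra_simps)
    also have "\<dots> = inverse a - inverse b"
      using inverse_mult_eq_1[OF assms(2)] inverse_mult_eq_1'[OF b0] by simp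
    finally show ?thesis by simp
  qed
  have "agree k (b - a) 0" using assms(1) by (simp add: agree_def)
  hence "agree k (inverse b + inverse a * inverse b * (b - a)) (inverse b + inverse a * inverse b * 0)"
    by (intro agree_add agree_mult agree_refl)
  thus ?thesis using e by simp
qed

lemma agree_all: "(\<And>k. agree k a b) \<Longrightarrow> a = b"
  by (rule fps_ext) (auto simp: agree_def)



lemma finite_base_vars[simp]: "finite (base_vars n)"
  by (simp add: base_vars_def)

lemma mon_base:
  assumes "Poly_Mapping.keys m \<subseteq> base_vars n"
  shows "mon \<rho> m = \<rho> Vx ^ Poly_Mapping.lookup m Vx
     * (\<Prod>i\<in>{1..n}. \<rho> (Vy0 i) ^ Poly_Mapping.lookup m (Vy0 i))
     * (\<Prod>i\<in>{1..n}. \<rho> (Vy i) ^ Poly_Mapping.lookup m (Vy i))"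
proof -
  have "mon \<rho> m = (\<Prod>v\<in>base_vars n. \<rho> v ^ Poly_Mapping.lookup m v)"
    by (rule mon_superset[OF finite_base_vars assms])
  also have "base_vars n = insert Vx (Vy0 ` {1..n} \<union> Vy ` {1..n})"
    by (auto simp: base_vars_def)
  also have "(\<Prod>v\<in>insert Vx (Vy0 ` {1..n} \<union> Vy ` {1..n}). \<rho> v ^ Poly_Mapping.lookup m v)
     = \<rho> Vx ^ Poly_Mapping.lookup m Vx * ((\<Prod>v\<in>Vy0 ` {1..n}. \<rho> v ^ Poly_Mapping.lookup m v)
        * (\<Prod>v\<in>Vy ` {1..n}. \<rho> v ^ Poly_Mapping.lookup m v))"
  proof -
    have disj: "Vy0 ` {1..n} \<inter> Vy ` {1..n} = {}" by auto
    show ?thesis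
      using prod.union_disjoint[of "Vy0 ` {1..n}" "Vy ` {1..n}" "\<lambda>v. \<rho> v ^ Poly_Mapping.lookup m v", OF _ _ disj]
      by (subst prod.insert) auto
  qed
  also have "(\<Prod>v\<in>Vy0 ` {1..n}. \<rho> v ^ Poly_Mapping.lookup m v) = (\<Prod>i\<in>{1..n}. \<rho> (Vy0 i) ^ Poly_Mapping.lookup m (Vy0 i))"
    by (subst prod.reindex) (auto simp: inj_on_def)
  also have "(\<Prod>v\<in>Vy ` {1..n}. \<rho> v ^ Poly_Mapping.lookup m v) = (\<Prod>i\<in>{1..n}. \<rho> (Vy i) ^ Poly_Mapping.lookup m (Vy i))"
    by (subst prod.reindex) (auto simp: inj_on_def)
  finally show ?thesis by (simp add: mult.assoc)
qed

lemma prod_list_concat_map: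
  "prod_list (map f (concat (map g xs))) = prod_list (map (\<lambda>x. prod_list (map f (g x))) xs)"
  by (induction xs) auto

lemma prod_list_upt: "prod_list (map h [0..<k]) = prod h {0..<k}"
  by (induction k) (auto simp: prod.atLeast0_lessThan_Suc mult.commute)

lemma prodlist_mon_idx:
  "prod_list (map (\<lambda>j. \<rho> (yvar j)) (mon_idx n m)) =
     \<rho> Vx ^ Poly_Mapping.lookup m Vx * (\<Prod>i\<in>{1..n}. \<rho> (Vy i) ^ Poly_Mapping.lookup m (Vy i))"
proof -
  have "prod_list (map (\<lambda>j. \<rho> (yvar j)) (mon_idx n m))
     = (\<Prod>i\<in>{0..<Suc n}. \<rho> (yvar i) ^ Poly_Mapping.lookup m (yvar i))"
    unfolding mon_idx_def prod_list_concat_map by (simp add: prod_list_upt)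
  also have "{0..<Suc n} = insert 0 {1..n}" by auto
  also have "(\<Prod>i\<in>insert 0 {1..n}. \<rho> (yvar i) ^ Poly_Mapping.lookup m (yvar i))
     = \<rho> Vx ^ Poly_Mapping.lookup m Vx * (\<Prod>i\<in>{1..n}. \<rho> (Vy i) ^ Poly_Mapping.lookup m (Vy i))"
    by (subst prod.insert) (auto simp: yvar_def intro!: prod.cong)
  finally show ?thesis .
qed

lemma fps_const_prod: "fps_const (prod f A) = (\<Prod>x\<in>A. fps_const (f x :: 'a::comm_ring_1))"
  by (induction A rule: infinite_finite_induct) (auto simp: fps_const_mult[symmetric])

lemma dlist_deriv:
  fixes \<rho>' :: "var \<Rightarrow> 'a::comm_ring_1 fps"
  assumes "set is \<subseteq> {0..n}" and init: "\<forall>i\<in>{1..n}. \<sigma> i $ 0 = r0 i"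
    and r: "\<rho>' Vx = fps_X" "\<forall>i. \<rho>' (Vy0 i) = fps_const (r0 i)" "\<forall>i\<in>{1..n}. \<rho>' (Vy i) = \<sigma> i"
      "\<forall>i\<in>{1..n}. \<rho>' (Vyd i) = sderiv (\<sigma> i)"
  shows "sderiv (prod_list (map (\<lambda>j. \<rho>' (yvar j)) is)) = peval fps_const \<rho>' (dlist is)"
  using assms(1)
proof (induction "is")
  case Nil
  then show ?case by simp
next
  case (Cons i "is")
  have IH: "sderiv (prod_list (map (\<lambda>j. \<rho>' (yvar j)) is)) = peval fps_const \<rho>' (dlist is)"
    using Cons by auto
  have i: "i \<le> n" using Cons.prems by auto
  have pl: "peval fps_const \<rho>' (prod_list (map (\<lambda>j. PVar (yvar j)) is)) = prod_list (map (\<lambda>j. \<rho>' (yvar j)) is)"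
    by (simp add: peval_prod_list[OF chom_fps_const] peval_PVar[OF chom_fps_const])
  have "peval fps_const \<rho>' (dlist (i # is)) =
     peval fps_const \<rho>' (dvar i) * prod_list (map (\<lambda>j. \<rho>' (yvar j)) is)
     + peval fps_const \<rho>' (y0var i) * peval fps_const \<rho>' (dlist is)"
    by (simp add: peval_add[OF chom_fps_const] peval_mult[OF chom_fps_const] pl)
  also have "\<dots> = sderiv (\<rho>' (yvar i)) * prod_list (map (\<lambda>j. \<rho>' (yvar j)) is)
     + fps_const (\<rho>' (yvar i) $ 0) * sderiv (prod_list (map (\<lambda>j. \<rho>' (yvar j)) is))"
  proof (cases "i = 0")
    case True
    have yi: "yvar 0 = Vx" by (simp add: yvar_def)
    show ?thesis using r True
      by (simp add: dvar_def y0var_def yi peval_one[OF chom_fps_const] IH)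
  next
    case False
    hence i1: "i \<in> {1..n}" using i by auto
    have yi: "yvar i = Vy i" using False by (simp add: yvar_def)
    show ?thesis using False r init i1
      by (simp add: dvar_def y0var_def yi peval_PVar[OF chom_fps_const] IH)
  qed
  also have "\<dots> = sderiv (prod_list (map (\<lambda>j. \<rho>' (yvar j)) (i # is)))"
    by (simp add: sderiv_mult)
  finally show ?case by simp
qed

lemma chain:
  fixes \<rho>' :: "var \<Rightarrow> 'a::comm_ring_1 fps"
  assumes g_vars: "pvars g \<subseteq> base_vars n" and init: "\<forall>i\<in>{1..n}. \<sigma> i $ 0 = r0 i"
    and r: "\<rho>' Vx = fps_X" "\<forall>i. \<rho>' (Vy0 i) = fps_const (r0 i)" "\<forall>i\<in>{1..n}. \<rho>' (Vy i) = \<sigma> i"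
      "\<forall>i\<in>{1..n}. \<rho>' (Vyd i) = sderiv (\<sigma> i)"
  shows "sderiv (seval r0 \<sigma> \<tau> g) = peval fps_const \<rho>' (pderiv_s n g)"
proof -
  let ?\<rho> = "sassign r0 \<sigma> \<tau>"
  let ?C = "\<lambda>m. fps_const (\<Prod>i\<in>{1..n}. r0 i ^ Poly_Mapping.lookup m (Vy0 i))"
  let ?P = "\<lambda>m. prod_list (map (\<lambda>j. \<rho>' (yvar j)) (mon_idx n m))"
  have trm: "sderiv (fps_const (Poly_Mapping.lookup g m) * mon ?\<rho> m)
     = peval fps_const \<rho>' (PConst (Poly_Mapping.lookup g m)
       * (\<Prod>i\<in>{1..n}. PVar (Vy0 i) ^ Poly_Mapping.lookup m (Vy0 i)) * dlist (mon_idx n m))"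
    if m: "m \<in> Poly_Mapping.keys g" for m
  proof -
    have km: "Poly_Mapping.keys m \<subseteq> base_vars n" using m g_vars by (auto simp: pvars_def)
    have "mon ?\<rho> m = ?C m * ?P m"
      unfolding mon_base[OF km] prodlist_mon_idx
      using r by (simp add: sassign_def fps_const_prod mult.assoc)
    hence "fps_const (Poly_Mapping.lookup g m) * mon ?\<rho> m
        = fps_const (Poly_Mapping.lookup g m * (\<Prod>i\<in>{1..n}. r0 i ^ Poly_Mapping.lookup m (Vy0 i))) * ?P m"
      by (simp add: mult.assoc[symmetric])
    hence "sderiv (fps_const (Poly_Mapping.lookup g m) * mon ?\<rho> m)
        = fps_const (Poly_Mapping.lookup g m * (\<Prod>i\<in>{1..n}. r0 i ^ Poly_Mapping.lookup m (Vy0 i))) * sderiv (?P m)"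
      by (simp only: sderiv_const_mult)
    hence "sderiv (fps_const (Poly_Mapping.lookup g m) * mon ?\<rho> m)
        = fps_const (Poly_Mapping.lookup g m) * (?C m * sderiv (?P m))"
      by (simp add: mult.assoc[symmetric])
    also have "sderiv (?P m) = peval fps_const \<rho>' (dlist (mon_idx n m))"
      by (rule dlist_deriv[OF _ init r]) (auto simp: mon_idx_def)
    finally show ?thesis
      using r by (simp add: peval_mult[OF chom_fps_const] peval_PConst[OF chom_fps_const]
        peval_prod[OF chom_fps_const] peval_power[OF chom_fps_const] peval_PVar[OF chom_fps_const]
        fps_const_prod mult.assoc)
  qed
  have "sderiv (seval r0 \<sigma> \<tau> g) = (\<Sum>m\<in>Poly_Mapping.keys g. sderiv (fps_const (Poly_Mapping.lookup g m) * mon ?\<rho> m))"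
    unfolding seval_def peval_alt sderiv_sum ..
  also have "\<dots> = (\<Sum>m\<in>Poly_Mapping.keys g. peval fps_const \<rho>' (PConst (Poly_Mapping.lookup g m)
       * (\<Prod>i\<in>{1..n}. PVar (Vy0 i) ^ Poly_Mapping.lookup m (Vy0 i)) * dlist (mon_idx n m)))"
    by (rule sum.cong[OF refl]) (rule trm)
  also have "\<dots> = peval fps_const \<rho>' (pderiv_s n g)"
    unfolding pderiv_s_def peval_sum[OF chom_fps_const] ..
  finally show ?thesis .
qed



lemma sassign_base_indep:
  "v \<in> base_vars n \<Longrightarrow> sassign r0 \<sigma> \<tau> v = sassign r0 \<sigma> \<tau>' v"
  by (auto simp: base_vars_def sassign_def)

lemma seval_indep:
  "pvars p \<subseteq> base_vars n \<Longrightarrow> seval r0 \<sigma> \<tau> p = seval r0 \<sigma> \<tau>' p"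
  unfolding seval_def by (rule peval_cong) (auto intro: sassign_base_indep)

lemma seval_cong_sigma:
  assumes "pvars p \<subseteq> base_vars n" "\<forall>i\<in>{1..n}. \<sigma>2 i = \<sigma> i"
  shows "seval r0 \<sigma>2 \<tau> p = seval r0 \<sigma> \<tau> p"
  unfolding seval_def by (rule peval_cong) (use assms in \<open>auto simp: base_vars_def sassign_def\<close>)

lemma seval_nth0:
  assumes "pvars p \<subseteq> base_vars n" "\<forall>i\<in>{1..n}. \<sigma> i $ 0 = r0 i"
  shows "seval r0 \<sigma> \<tau> p $ 0 = eval0 r0 p"
  unfolding seval_def peval_nth0 eval0_def
  by (rule peval_cong) (use assms in \<open>auto simp: base_vars_def sassign_def\<close>)

lemma h_eval:
  "seval r0 \<sigma> \<tau> (subst_d f q) = peval fps_const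
     (\<lambda>v. case v of Vyd i \<Rightarrow> seval r0 \<sigma> \<tau> (f i) * \<tau> | _ \<Rightarrow> sassign r0 \<sigma> \<tau> v) q"
  unfolding subst_d_def seval_def peval_compose[OF chom_fps_const]
  by (rule arg_cong[where f="\<lambda>r. peval fps_const r q"])
     (auto simp: fun_eq_iff peval_mult[OF chom_fps_const] peval_PVar[OF chom_fps_const] sassign_def
       split: var.split)

lemma chain_h:
  assumes g_vars: "pvars g \<subseteq> base_vars n" and init: "\<forall>i\<in>{1..n}. \<sigma> i $ 0 = r0 i"
    and deriv: "\<forall>i\<in>{1..n}. sderiv (\<sigma> i) = seval r0 \<sigma> \<tau> (f i) * \<tau>"
  shows "sderiv (seval r0 \<sigma> \<tau> g) = seval r0 \<sigma> \<tau> (subst_d f (pderiv_s n g))"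
  unfolding h_eval
  by (rule chain[OF g_vars init]) (use deriv in \<open>auto simp: sassign_def\<close>)

lemma aux_cancel:
  fixes a b h t :: "'b::comm_ring_1"
  assumes "a * b = 1"
  shows "h * t + a * (- b * h * t) = 0"
proof -
  have "a * (- b * h * t) = - ((a * b) * (h * t))" by (simp add: algebra_simps)
  thus ?thesis using assms by simp
qed

lemma key:
  fixes g :: "'a::field_char_0 mpoly"
  assumes g_vars: "pvars g \<subseteq> base_vars n" and g0: "eval0 r0 g \<noteq> 0"
    and init: "\<forall>i\<in>{1..n}. \<sigma> i $ 0 = r0 i"
    and deriv: "\<forall>i\<in>{1..n}. sderiv (\<sigma> i) = seval r0 \<sigma> \<tau> (f i) * \<tau>"
  shows "(sderiv \<tau> = - fps_const (inverse (eval0 r0 g)) * seval r0 \<sigma> \<tau> (subst_d f (pderiv_s n g)) * \<tau>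
          \<and> \<tau> $ 0 = inverse (eval0 r0 g)) \<longleftrightarrow> \<tau> = inverse (seval r0 \<sigma> \<tau> g)"
proof -
  define G where "G = seval r0 \<sigma> \<tau> g"
  define H where "H = seval r0 \<sigma> \<tau> (subst_d f (pderiv_s n g))"
  define c where "c = eval0 r0 g"
  have G0: "G $ 0 = c" unfolding G_def c_def by (rule seval_nth0[OF g_vars init])
  have c0: "c \<noteq> 0" using g0 by (simp add: c_def)
  have dG: "sderiv G = H" unfolding G_def H_def by (rule chain_h[OF g_vars init deriv])
  have cc: "fps_const (inverse c) * fps_const c = 1" using c0 by simp
  have "(sderiv \<tau> = - fps_const (inverse c) * H * \<tau> \<and> \<tau> $ 0 = inverse c) \<longleftrightarrow> \<tau> = inverse G"
  proof
    assume L: "sderiv \<tau> = - fps_const (inverse c) * H * \<tau> \<and> \<tau> $ 0 = inverse c"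
    define u where "u = G * \<tau>"
    have "sderiv u = H * \<tau> + fps_const c * (- fps_const (inverse c) * H * \<tau>)"
      unfolding u_def sderiv_mult dG G0 using L by simp
    also have "\<dots> = 0" by (rule aux_cancel) (use c0 in simp)
    finally have "u = fps_const (u $ 0)" by (rule sderiv_zero_eq)
    moreover have "u $ 0 = 1" unfolding u_def using L G0 c0 by simp
    ultimately have u1: "G * \<tau> = 1" unfolding u_def by simp
    have "inverse G = inverse G * (G * \<tau>)" unfolding u1 by simp
    also have "\<dots> = (inverse G * G) * \<tau>" by (simp add: mult.assoc)
    also have "\<dots> = \<tau>" using inverse_mult_eq_1[of G] G0 c0 by simp
    finally show "\<tau> = inverse G" by simp
  next
    assume R: "\<tau> = inverse G"
    have Gt: "G * \<tau> = 1" unfolding R using inverse_mult_eq_1'[of G] G0 c0 by simp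
    have "0 = sderiv (G * \<tau>)" unfolding Gt by simp
    also have "\<dots> = H * \<tau> + fps_const c * sderiv \<tau>" unfolding sderiv_mult dG G0 ..
    finally have e: "fps_const c * sderiv \<tau> = - (H * \<tau>)" by (simp add: eq_neg_iff_add_eq_0 add.commute)
    have "sderiv \<tau> = (fps_const (inverse c) * fps_const c) * sderiv \<tau>" unfolding cc by simp
    also have "\<dots> = fps_const (inverse c) * (fps_const c * sderiv \<tau>)" by (simp only: mult.assoc)
    also have "\<dots> = - fps_const (inverse c) * H * \<tau>" unfolding e by (simp only: mult_minus_left mult_minus_right ac_simps)
    finally show "sderiv \<tau> = - fps_const (inverse c) * H * \<tau> \<and> \<tau> $ 0 = inverse c"
      using R G0 by simp
  qed
  thus ?thesis unfolding G_def H_def c_def .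
qed

lemma agree_sassign:
  "(\<forall>i\<in>{1..n}. agree k (\<sigma>2 i) (\<sigma> i)) \<Longrightarrow> v \<in> base_vars n
   \<Longrightarrow> agree k (sassign r0 \<sigma>2 \<tau> v) (sassign r0 \<sigma> \<tau> v)"
  by (auto simp: base_vars_def sassign_def)

lemma uni:
  fixes g :: "'a::field_char_0 mpoly"
  assumes f_vars: "\<forall>i\<in>{1..n}. pvars (f i) \<subseteq> base_vars n"
    and g_vars: "pvars g \<subseteq> base_vars n" and g0: "eval0 r0 g \<noteq> 0"
    and A: "\<forall>i\<in>{1..n}. sderiv (\<sigma> i) = seval r0 \<sigma> 0 (f i) * inverse (seval r0 \<sigma> 0 g) \<and> \<sigma> i $ 0 = r0 i"
    and B: "\<forall>i\<in>{1..n}. sderiv (\<sigma>2 i) = seval r0 \<sigma>2 0 (f i) * inverse (seval r0 \<sigma>2 0 g) \<and> \<sigma>2 i $ 0 = r0 i"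
  shows "\<forall>i\<in>{1..n}. \<sigma>2 i = \<sigma> i"
proof -
  have init2: "\<forall>i\<in>{1..n}. \<sigma>2 i $ 0 = r0 i" using B by auto
  have "\<forall>i\<in>{1..n}. agree k (\<sigma>2 i) (\<sigma> i)" for k
  proof (induction k)
    case 0
    then show ?case using A B by (auto simp: agree_def)
  next
    case (Suc k)
    have ag: "agree k (seval r0 \<sigma>2 0 p) (seval r0 \<sigma> 0 p)" if "pvars p \<subseteq> base_vars n" for p
      unfolding seval_def by (rule agree_peval, rule agree_sassign[OF Suc.IH]) (use that in blast)
    have G0: "seval r0 \<sigma>2 0 g $ 0 \<noteq> 0" using seval_nth0[OF g_vars init2] g0 by simp
    show ?case
    proof
      fix i assume i: "i \<in> {1..n}"
      have "agree k (sderiv (\<sigma>2 i)) (sderiv (\<sigma> i))"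
        using A B i f_vars by (auto intro!: agree_mult agree_inverse ag g_vars G0)
      thus "agree (Suc k) (\<sigma>2 i) (\<sigma> i)" using A B i by (simp add: agree_Suc)
    qed
  qed
  thus ?thesis by (auto intro: agree_all)
qed



theorem lemma3p3:
  fixes n :: nat and f :: "nat \<Rightarrow> 'a::field_char_0 mpoly" and g :: "'a mpoly"
    and r0 :: "nat \<Rightarrow> 'a" and \<sigma> :: "nat \<Rightarrow> 'a fps"
  assumes f_vars: "\<forall>i\<in>{1..n}. pvars (f i) \<subseteq> base_vars n"
    and g_vars: "pvars g \<subseteq> base_vars n"
    and g0: "eval0 r0 g \<noteq> 0"
  defines "h \<equiv> subst_d f (pderiv_s n g)"
  shows "((\<forall>i\<in>{1..n}. sderiv (\<sigma> i) = seval r0 \<sigma> 0 (f i) * inverse (seval r0 \<sigma> 0 g)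
                      \<and> fps_nth (\<sigma> i) 0 = r0 i)
          \<longrightarrow> (let \<tau> = inverse (seval r0 \<sigma> 0 g);
                   ivp = (\<lambda>\<sigma>2 \<tau>2.
                     (\<forall>i\<in>{1..n}. sderiv (\<sigma>2 i) = seval r0 \<sigma>2 \<tau>2 (f i) * \<tau>2 \<and> fps_nth (\<sigma>2 i) 0 = r0 i)
                     \<and> sderiv \<tau>2 = - fps_const (inverse (eval0 r0 g)) * seval r0 \<sigma>2 \<tau>2 h * \<tau>2
                     \<and> fps_nth \<tau>2 0 = inverse (eval0 r0 g))
               in ivp \<sigma> \<tau> \<and>
                  (\<forall>\<sigma>2 \<tau>2. ivp \<sigma>2 \<tau>2 \<longrightarrow> (\<forall>i\<in>{1..n}. \<sigma>2 i = \<sigma> i) \<and> \<tau>2 = \<tau>)))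
       \<and> (\<forall>\<tau>. ((\<forall>i\<in>{1..n}. sderiv (\<sigma> i) = seval r0 \<sigma> \<tau> (f i) * \<tau> \<and> fps_nth (\<sigma> i) 0 = r0 i)
                 \<and> sderiv \<tau> = - fps_const (inverse (eval0 r0 g)) * seval r0 \<sigma> \<tau> h * \<tau>
                 \<and> fps_nth \<tau> 0 = inverse (eval0 r0 g))
             \<longrightarrow> (\<forall>i\<in>{1..n}. sderiv (\<sigma> i) = seval r0 \<sigma> 0 (f i) * inverse (seval r0 \<sigma> 0 g)
                      \<and> fps_nth (\<sigma> i) 0 = r0 i))"
proof -
  define A where "A = (\<lambda>s. \<forall>i\<in>{1..n}. sderiv (s i) = seval r0 s 0 (f i) * inverse (seval r0 s 0 g)
                      \<and> fps_nth (s i) 0 = r0 i)"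
  define I where "I = (\<lambda>\<sigma>2 \<tau>2.
                     (\<forall>i\<in>{1..n}. sderiv (\<sigma>2 i) = seval r0 \<sigma>2 \<tau>2 (f i) * \<tau>2 \<and> fps_nth (\<sigma>2 i) 0 = r0 i)
                     \<and> sderiv \<tau>2 = - fps_const (inverse (eval0 r0 g)) * seval r0 \<sigma>2 \<tau>2 h * \<tau>2
                     \<and> fps_nth \<tau>2 0 = inverse (eval0 r0 g))"
  have indep: "\<And>s t i. i \<in> {1..n} \<Longrightarrow> seval r0 s t (f i) = seval r0 s 0 (f i)"
    using f_vars by (intro seval_indep) blast
  have indep_g: "\<And>s t. seval r0 s t g = seval r0 s 0 g"
    using g_vars by (intro seval_indep)
  have conv: "A s \<and> t = inverse (seval r0 s 0 g)" if It: "I s t" for s t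
  proof -
    have init: "\<forall>i\<in>{1..n}. s i $ 0 = r0 i" and deriv: "\<forall>i\<in>{1..n}. sderiv (s i) = seval r0 s t (f i) * t"
      using It by (auto simp: I_def)
    have "t = inverse (seval r0 s t g)"
      using key[OF g_vars g0 init deriv] It by (simp add: I_def h_def)
    hence tt: "t = inverse (seval r0 s 0 g)" using indep_g[of s t] by simp
    have "A s" unfolding A_def
    proof
      fix i assume i: "i \<in> {1..n}"
      have "sderiv (s i) = seval r0 s t (f i) * t" using deriv i by blast
      also have "\<dots> = seval r0 s 0 (f i) * inverse (seval r0 s 0 g)"
        using indep[OF i, of s t] tt by simp
      finally show "sderiv (s i) = seval r0 s 0 (f i) * inverse (seval r0 s 0 g) \<and> s i $ 0 = r0 i"
        using init i by blast
    qed
    thus ?thesis using tt by simp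
  qed
  have fwd: "I \<sigma> (inverse (seval r0 \<sigma> 0 g))" if As: "A \<sigma>"
  proof -
    let ?t = "inverse (seval r0 \<sigma> 0 g)"
    have init: "\<forall>i\<in>{1..n}. \<sigma> i $ 0 = r0 i" using As by (auto simp: A_def)
    have deriv: "\<forall>i\<in>{1..n}. sderiv (\<sigma> i) = seval r0 \<sigma> ?t (f i) * ?t"
    proof
      fix i assume i: "i \<in> {1..n}"
      have "sderiv (\<sigma> i) = seval r0 \<sigma> 0 (f i) * ?t" using As i by (simp add: A_def)
      also have "\<dots> = seval r0 \<sigma> ?t (f i) * ?t" using indep[OF i, of \<sigma> ?t] by simp
      finally show "sderiv (\<sigma> i) = seval r0 \<sigma> ?t (f i) * ?t" .
    qed
    have "?t = inverse (seval r0 \<sigma> ?t g)" using indep_g[of \<sigma> ?t] by simp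
    hence "sderiv ?t = - fps_const (inverse (eval0 r0 g)) * seval r0 \<sigma> ?t h * ?t
          \<and> ?t $ 0 = inverse (eval0 r0 g)"
      using key[OF g_vars g0 init deriv] by (simp add: h_def)
    thus ?thesis unfolding I_def using init deriv by auto
  qed
  have uq: "\<forall>i\<in>{1..n}. s i = \<sigma> i" if "A \<sigma>" "A s" for s
    by (rule uni[OF f_vars g_vars g0]) (use that in \<open>auto simp: A_def\<close>)
  have same: "seval r0 s 0 g = seval r0 \<sigma> 0 g" if "\<forall>i\<in>{1..n}. s i = \<sigma> i" for s
    by (rule seval_cong_sigma[OF g_vars that])
  have main: "(A \<sigma> \<longrightarrow> (let \<tau> = inverse (seval r0 \<sigma> 0 g) in I \<sigma> \<tau> \<and>
                  (\<forall>\<sigma>2 \<tau>2. I \<sigma>2 \<tau>2 \<longrightarrow> (\<forall>i\<in>{1..n}. \<sigma>2 i = \<sigma> i) \<and> \<tau>2 = \<tau>)))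
        \<and> (\<forall>\<tau>. I \<sigma> \<tau> \<longrightarrow> A \<sigma>)"
  proof (intro conjI impI allI)
    assume As: "A \<sigma>"
    show "let \<tau> = inverse (seval r0 \<sigma> 0 g) in I \<sigma> \<tau> \<and>
                  (\<forall>\<sigma>2 \<tau>2. I \<sigma>2 \<tau>2 \<longrightarrow> (\<forall>i\<in>{1..n}. \<sigma>2 i = \<sigma> i) \<and> \<tau>2 = \<tau>)"
      unfolding Let_def
    proof (intro conjI allI impI)
      show "I \<sigma> (inverse (seval r0 \<sigma> 0 g))" by (rule fwd[OF As])
    next
      fix \<sigma>2 \<tau>2 assume "I \<sigma>2 \<tau>2"
      hence c: "A \<sigma>2" "\<tau>2 = inverse (seval r0 \<sigma>2 0 g)" using conv by auto
      have e: "\<forall>i\<in>{1..n}. \<sigma>2 i = \<sigma> i" by (rule uq[OF As c(1)])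
      have "seval r0 \<sigma>2 0 g = seval r0 \<sigma> 0 g" by (rule same[OF e])
      thus "\<forall>i\<in>{1..n}. \<sigma>2 i = \<sigma> i" "\<tau>2 = inverse (seval r0 \<sigma> 0 g)"
        using c(2) e by simp_all
    qed
  next
    fix \<tau> assume "I \<sigma> \<tau>" thus "A \<sigma>" using conv by blast
  qed
  show ?thesis using main unfolding A_def I_def Let_def .
qed


end
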